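(* Let $\beta_0<\beta_2<\beta_1$, $n\ge2$ and $1\le j\le n-1$. Assume there exist $C_j,\alpha_j>0$ such that for all $t\ge0$ and all integers $\ell\in[0,t]$, $$\mathbb{P}_{\mathbf 0}\big(\Delta_jX^n_t>0,\ \tau^j_t\in[\ell-1,\ell)\big)\le C_je^{-\alpha_j(t-\ell)}.$$ Then $((\Delta_jX^n_t)^+)_{t\ge0}$ is exponentially tight, i.e. there exist $C,\alpha>0$ with $\mathbb{P}_{\mathbf 0}(\Delta_jX^n_t\ge k)\le Ce^{-\alpha k}$ for all $t\ge0$ and all $k\ge0$.
   Context: For $x\in\mathbb{N}^n$, with zero boundary convention $x(0)=x(n+1)=0$, let $V_j(x)=\mathbf 1_{\{x(j-1)>x(j)\}}+\mathbf 1_{\{x(j+1)>x(j)\}}$. The crystal process $X^n$ with parameter $\beta=(\beta_0,\beta_1,\beta_2)$ is the continuous-time Markov chain on $\mathbb{N}^n$ jumping from $x$ to $x+e_j$ at rate $\beta_{V_j(x)}$, no other transitions; $\mathbb{P}_{\mathbf 0}$ is its law from the zero configuration. $\Delta_jX^n_t=X^n_t(j)-X^n_t(j+1)$, $a^+=\max(a,0)$, and $\tau^j_t=\sup\{s\le t:\Delta_jX^n_s=0\}$. *)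

theory Defs
  imports "HOL-Probability.Probability"
begin

text \<open>Configurations x : {1..n} -> N are encoded as functions nat => nat that vanish
  outside {1..n}; in particular x 0 = x (n+1) = 0 (zero boundary convention).\<close>

definition zero_conf :: "nat \<Rightarrow> nat" where
  "zero_conf = (\<lambda>_. 0)"

definition Vnb :: "(nat \<Rightarrow> nat) \<Rightarrow> nat \<Rightarrow> nat" where
  "Vnb x j = (if x (j - 1) > x j then 1 else 0) + (if x (j + 1) > x j then 1 else 0)"

definition brate :: "real \<Rightarrow> real \<Rightarrow> real \<Rightarrow> nat \<Rightarrow> real" where
  "brate b0 b1 b2 v = (if v = 0 then b0 else if v = 1 then b1 else b2)"

text \<open>Construction of the crystal process by uniformization with the uniform
  rate bound b1 (the largest rate, as b0 < b2 < b1): a Poisson clock of total rate n*b1;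
  at each ring a site J is chosen uniformly in {1..n} and, given the current
  configuration x, the jump x -> x + e_J is performed with probability
  beta_{V_J(x)} / b1 (decided by an independent uniform U in [0,1]).
  The marks (E_k, J_k, U_k) are i.i.d.; E_k are the Exp(n*b1) inter-arrival times.\<close>

definition mark_measure :: "nat \<Rightarrow> real \<Rightarrow> (real \<times> nat \<times> real) measure" where
  "mark_measure n b1 =
     density lborel (\<lambda>e. ennreal (exponential_density (real n * b1) e))
     \<Otimes>\<^sub>M (measure_pmf (pmf_of_set {1..n}) \<Otimes>\<^sub>M uniform_measure lborel {0..1})"

definition crystal_space :: "nat \<Rightarrow> real \<Rightarrow> (real \<times> nat \<times> real) stream measure" where
  "crystal_space n b1 = stream_space (mark_measure n b1)"

primrec jchain :: "real \<Rightarrow> real \<Rightarrow> real \<Rightarrow> (real \<times> nat \<times> real) stream \<Rightarrow> nat \<Rightarrow> (nat \<Rightarrow> nat)" where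
  "jchain b0 b1 b2 \<omega> 0 = zero_conf"
| "jchain b0 b1 b2 \<omega> (Suc k) =
     (let x = jchain b0 b1 b2 \<omega> k; j = fst (snd (\<omega> !! k)); u = snd (snd (\<omega> !! k)) in
      if u < brate b0 b1 b2 (Vnb x j) / b1 then x(j := Suc (x j)) else x)"

definition ring_time :: "(real \<times> nat \<times> real) stream \<Rightarrow> nat \<Rightarrow> real" where
  "ring_time \<omega> k = (\<Sum>i<k. fst (\<omega> !! i))"

definition nrings :: "(real \<times> nat \<times> real) stream \<Rightarrow> real \<Rightarrow> nat" where
  "nrings \<omega> t = card {k. 0 < k \<and> ring_time \<omega> k \<le> t}"

definition crystal :: "real \<Rightarrow> real \<Rightarrow> real \<Rightarrow> (real \<times> nat \<times> real) stream \<Rightarrow> real \<Rightarrow> (nat \<Rightarrow> nat)" where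
  "crystal b0 b1 b2 \<omega> t = jchain b0 b1 b2 \<omega> (nrings \<omega> t)"

definition gapX :: "real \<Rightarrow> real \<Rightarrow> real \<Rightarrow> (real \<times> nat \<times> real) stream \<Rightarrow> nat \<Rightarrow> real \<Rightarrow> int" where
  "gapX b0 b1 b2 \<omega> j t = int (crystal b0 b1 b2 \<omega> t j) - int (crystal b0 b1 b2 \<omega> t (j + 1))"

definition tauX :: "real \<Rightarrow> real \<Rightarrow> real \<Rightarrow> (real \<times> nat \<times> real) stream \<Rightarrow> nat \<Rightarrow> real \<Rightarrow> real" where
  "tauX b0 b1 b2 \<omega> j t = Sup {s. 0 \<le> s \<and> s \<le> t \<and> gapX b0 b1 b2 \<omega> j s = 0}"

end

theory Submission
  imports Defs
begin

lemma meas_E[measurable]: "(\<lambda>\<omega>. fst (\<omega> !! i)) \<in> borel_measurable (crystal_space n b1)"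
  unfolding crystal_space_def mark_measure_def by measurable

lemma meas_U[measurable]: "(\<lambda>\<omega>. snd (snd (\<omega> !! i))) \<in> borel_measurable (crystal_space n b1)"
  unfolding crystal_space_def mark_measure_def by measurable

lemma meas_J[measurable]: "(\<lambda>\<omega>. fst (snd (\<omega> !! i))) \<in> measurable (crystal_space n b1) (count_space UNIV)"
proof -
  have "(\<lambda>\<omega>. fst (snd (\<omega> !! i))) \<in> measurable (crystal_space n b1) (measure_pmf (pmf_of_set {1..n}))"
    unfolding crystal_space_def mark_measure_def by measurable
  then show ?thesis by (simp add: measurable_cong_sets)
qed

lemma meas_T[measurable]: "(\<lambda>\<omega>. ring_time \<omega> k) \<in> borel_measurable (crystal_space n b1)"
  unfolding ring_time_def by measurable

lemma meas_app_cnt: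
  fixes X :: "'a \<Rightarrow> nat \<Rightarrow> nat"
  assumes "\<And>j. (\<lambda>\<omega>. X \<omega> j) \<in> measurable M (count_space UNIV)"
    and "g \<in> measurable M (count_space UNIV)"
  shows "(\<lambda>\<omega>. X \<omega> (g \<omega>)) \<in> measurable M (count_space UNIV)"
  using measurable_compose_countable[where f="\<lambda>j \<omega>. X \<omega> j", OF assms] by simp

lemma meas2_cnt:
  fixes f g :: "'a \<Rightarrow> 'b::countable"
  assumes "f \<in> measurable M (count_space UNIV)" "g \<in> measurable M (count_space UNIV)"
  shows "(\<lambda>\<omega>. h (f \<omega>) (g \<omega>)) \<in> measurable M (count_space UNIV)"
proof -
  have "\<And>i. (\<lambda>\<omega>. h i (g \<omega>)) \<in> measurable M (count_space UNIV)"
  proof -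
    fix i
    have "h i \<in> measurable (count_space UNIV) (count_space UNIV)" by simp
    then show "(\<lambda>\<omega>. h i (g \<omega>)) \<in> measurable M (count_space UNIV)" using measurable_compose[OF assms(2)] by blast
  qed
  then show ?thesis using measurable_compose_countable[where f="\<lambda>i \<omega>. h i (g \<omega>)", OF _ assms(1)] by simp
qed

lemma meas_jchain[measurable]:
  "(\<lambda>\<omega>. jchain b0 b1 b2 \<omega> m i) \<in> measurable (crystal_space n b1) (count_space UNIV)"
proof (induction m arbitrary: i)
  case 0
  then show ?case by simp
next
  case (Suc m)
  define X where "X = (\<lambda>\<omega>. jchain b0 b1 b2 \<omega> m)"
  define J where "J = (\<lambda>\<omega>::(real \<times> nat \<times> real) stream. fst (snd (\<omega> !! m)))"
  have XJ: "(\<lambda>\<omega>. X \<omega> (g \<omega>)) \<in> measurable (crystal_space n b1) (count_space UNIV)"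
    if "g \<in> measurable (crystal_space n b1) (count_space UNIV)" for g
    by (rule meas_app_cnt[OF _ that]) (use Suc in \<open>simp add: X_def\<close>)
  have J[measurable]: "J \<in> measurable (crystal_space n b1) (count_space UNIV)"
    unfolding J_def by measurable
  have [measurable]: "(\<lambda>\<omega>. X \<omega> (J \<omega>)) \<in> measurable (crystal_space n b1) (count_space UNIV)"
    by (rule XJ) measurable
  have [measurable]: "(\<lambda>\<omega>. X \<omega> (J \<omega> - 1)) \<in> measurable (crystal_space n b1) (count_space UNIV)"
    by (rule XJ) measurable
  have [measurable]: "(\<lambda>\<omega>. X \<omega> (J \<omega> + 1)) \<in> measurable (crystal_space n b1) (count_space UNIV)"
    by (rule XJ) measurable
  have [measurable]: "(\<lambda>\<omega>. X \<omega> i) \<in> measurable (crystal_space n b1) (count_space UNIV)"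
    using Suc by (simp add: X_def)
  have V[measurable]: "(\<lambda>\<omega>. Vnb (X \<omega>) (J \<omega>)) \<in> measurable (crystal_space n b1) (count_space UNIV)"
    unfolding Vnb_def
    by (rule meas2_cnt[where h="(+)"]; rule meas2_cnt[where h="\<lambda>a b. if a > b then 1 else 0"]; measurable)
  have [measurable]: "(\<lambda>\<omega>. brate b0 b1 b2 (Vnb (X \<omega>) (J \<omega>)) / b1) \<in> borel_measurable (crystal_space n b1)"
    using measurable_compose[OF V, of "\<lambda>v. brate b0 b1 b2 v / b1" borel] by simp
  have eq: "(\<lambda>\<omega>. jchain b0 b1 b2 \<omega> (Suc m) i) = (\<lambda>\<omega>.
     if snd (snd (\<omega> !! m)) < brate b0 b1 b2 (Vnb (X \<omega>) (J \<omega>)) / b1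
     then (if i = J \<omega> then Suc (X \<omega> (J \<omega>)) else X \<omega> i) else X \<omega> i)"
    by (auto simp: X_def J_def Let_def)
  have P1: "Measurable.pred (crystal_space n b1) (\<lambda>\<omega>. i = J \<omega>)"
    using measurable_compose[OF J, of "\<lambda>a. i = a" "count_space UNIV"] by simp
  have [measurable]: "(\<lambda>\<omega>. Suc (X \<omega> (J \<omega>))) \<in> measurable (crystal_space n b1) (count_space UNIV)"
    using measurable_compose[OF \<open>(\<lambda>\<omega>. X \<omega> (J \<omega>)) \<in> _\<close>, of Suc "count_space UNIV"] by simp
  have A: "(\<lambda>\<omega>. if i = J \<omega> then Suc (X \<omega> (J \<omega>)) else X \<omega> i) \<in> measurable (crystal_space n b1) (count_space UNIV)"
    by (rule measurable_If[OF _ _ P1[unfolded pred_def]]) measurable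
  have P2: "Measurable.pred (crystal_space n b1) (\<lambda>\<omega>. snd (snd (\<omega> !! m)) < brate b0 b1 b2 (Vnb (X \<omega>) (J \<omega>)) / b1)"
    by measurable
  show ?case unfolding eq by (rule measurable_If[OF A _ P2[unfolded pred_def]]) measurable
qed

lemma card_char:
  fixes F :: "nat set"
  shows "card F = m \<longleftrightarrow>
    ((\<exists>K. \<forall>k\<ge>K. k \<notin> F) \<and> (\<exists>K. \<forall>K'\<ge>K. (\<Sum>k<K'. if k \<in> F then 1 else 0 :: real) = real m))
    \<or> (\<not> (\<exists>K. \<forall>k\<ge>K. k \<notin> F) \<and> m = 0)"
proof -
  have sumeq: "(\<Sum>k<K'. if k \<in> F then 1 else 0 :: real) = real (card (F \<inter> {..<K'}))" for K'
    by (simp add: sum.If_cases Int_commute)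
  have fin: "finite F \<longleftrightarrow> (\<exists>K. \<forall>k\<ge>K. k \<notin> F)"
    by (metis finite_nat_set_iff_bounded leD le_less_linear)
  show ?thesis
  proof (cases "finite F")
    case True
    then obtain K where K: "\<forall>k\<ge>K. k \<notin> F" using fin by blast
    have "F \<inter> {..<K'} = F" if "K' \<ge> K" for K'
      using K that by (auto intro: ccontr)
    then have "(\<exists>K. \<forall>K'\<ge>K. (\<Sum>k<K'. if k \<in> F then 1 else 0 :: real) = real m) \<longleftrightarrow> card F = m"
      unfolding sumeq by (metis nat_le_linear of_nat_eq_iff)
    then show ?thesis using True fin by blast
  next
    case False
    then show ?thesis using fin by auto
  qed
qed

lemma card_char':
  fixes P :: "nat \<Rightarrow> bool"
  shows "card {k. P k} = m \<longleftrightarrow>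
    ((\<exists>K. \<forall>k\<ge>K. \<not> P k) \<and> (\<exists>K. \<forall>K'\<ge>K. (\<Sum>k<K'. if P k then 1 else 0 :: real) = real m))
    \<or> (\<not> (\<exists>K. \<forall>k\<ge>K. \<not> P k) \<and> m = 0)"
  using card_char[of "{k. P k}" m] by simp

lemma meas_card[measurable]:
  assumes [measurable]: "r \<in> borel_measurable (crystal_space n b1)"
  shows "(\<lambda>\<omega>. card {k. 0 < k \<and> ring_time \<omega> k \<le> r \<omega>}) \<in> measurable (crystal_space n b1) (count_space UNIV)"
proof (subst measurable_count_space_eq2_countable, safe)
  fix m :: nat
  have "(\<lambda>\<omega>. card {k. 0 < k \<and> ring_time \<omega> k \<le> r \<omega>}) -` {m} \<inter> space (crystal_space n b1) =
    {\<omega> \<in> space (crystal_space n b1). 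
    ((\<exists>K. \<forall>k\<ge>K. \<not> (0 < k \<and> ring_time \<omega> k \<le> r \<omega>)) \<and> (\<exists>K. \<forall>K'\<ge>K. (\<Sum>k<K'. if 0 < k \<and> ring_time \<omega> k \<le> r \<omega> then 1 else 0 :: real) = real m))
    \<or> (\<not> (\<exists>K. \<forall>k\<ge>K. \<not> (0 < k \<and> ring_time \<omega> k \<le> r \<omega>)) \<and> m = 0)}"
    unfolding vimage_def Int_def by (simp only: card_char' mem_Collect_eq singleton_iff) blast
  also have "\<dots> \<in> sets (crystal_space n b1)" by measurable
  finally show "(\<lambda>\<omega>. card {k. 0 < k \<and> ring_time \<omega> k \<le> r \<omega>}) -` {m} \<inter> space (crystal_space n b1) \<in> sets (crystal_space n b1)" .
qed simp

lemma meas_crystal[measurable]: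
  assumes [measurable]: "r \<in> borel_measurable (crystal_space n b1)"
  shows "(\<lambda>\<omega>. crystal b0 b1 b2 \<omega> (r \<omega>) i) \<in> measurable (crystal_space n b1) (count_space UNIV)"
  unfolding crystal_def nrings_def
  by (rule measurable_compose_countable[where f="\<lambda>m \<omega>. jchain b0 b1 b2 \<omega> m i"]) measurable

lemma meas_gap[measurable]:
  assumes [measurable]: "r \<in> borel_measurable (crystal_space n b1)"
  shows "(\<lambda>\<omega>. gapX b0 b1 b2 \<omega> j (r \<omega>)) \<in> measurable (crystal_space n b1) (count_space UNIV)"
  unfolding gapX_def
  by (rule meas2_cnt[where h="\<lambda>a b. int a - int b"]) measurable

definition Sset :: "(real \<times> nat \<times> real) stream \<Rightarrow> real \<Rightarrow> nat set" where
  "Sset \<omega> s = {k. 0 < k \<and> ring_time \<omega> k \<le> s}"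

lemma gapX_Sset: "Sset \<omega> s = Sset \<omega> s' \<Longrightarrow> gapX b0 b1 b2 \<omega> j s = gapX b0 b1 b2 \<omega> j s'"
  unfolding gapX_def crystal_def nrings_def Sset_def by simp

lemma gapX_inf: "infinite (Sset \<omega> s) \<Longrightarrow> gapX b0 b1 b2 \<omega> j s = 0"
  unfolding gapX_def crystal_def nrings_def Sset_def by (simp add: zero_conf_def)

lemma Sset_mono: "s \<le> s' \<Longrightarrow> Sset \<omega> s \<subseteq> Sset \<omega> s'"
  unfolding Sset_def by auto

lemma exists_Z_char:
  fixes t c b0 b1 b2 :: real and \<omega> and j :: nat
  defines "Z \<equiv> {s. 0 \<le> s \<and> s \<le> t \<and> gapX b0 b1 b2 \<omega> j s = 0}"
  shows "(\<exists>s\<in>Z. c < s) \<longleftrightarrow>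
    (\<exists>q::rat. of_rat q \<in> Z \<and> c < of_rat q) \<or> (\<exists>k. ring_time \<omega> k \<in> Z \<and> c < ring_time \<omega> k)
    \<or> (infinite (Sset \<omega> t) \<and> c < t \<and> 0 \<le> t)"
proof
  assume "\<exists>s\<in>Z. c < s"
  then obtain s where sZ: "s \<in> Z" and cs: "c < s" by blast
  show "(\<exists>q::rat. of_rat q \<in> Z \<and> c < of_rat q) \<or> (\<exists>k. ring_time \<omega> k \<in> Z \<and> c < ring_time \<omega> k)
    \<or> (infinite (Sset \<omega> t) \<and> c < t \<and> 0 \<le> t)"
  proof (cases "finite (Sset \<omega> s)")
    case False
    then have "infinite (Sset \<omega> t)" using Sset_mono[of s t \<omega>] sZ finite_subset unfolding Z_def by blast
    then show ?thesis using sZ cs unfolding Z_def by auto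
  next
    case fin: True
    show ?thesis
    proof (cases "\<exists>k. ring_time \<omega> k = s")
      case True then show ?thesis using sZ cs by auto
    next
      case notT: False
      show ?thesis
      proof (cases "s = 0")
        case True
        then show ?thesis using sZ cs by (intro disjI1 exI[of _ 0]) auto
      next
        case False
        then have s0: "0 < s" using sZ unfolding Z_def by auto
        define A where "A = (\<lambda>k. ring_time \<omega> k) ` Sset \<omega> s"
        have finA: "finite A" using fin unfolding A_def by simp
        have Als: "\<forall>a\<in>A. a < s"
        proof
          fix a assume "a \<in> A"
          then obtain k where "a = ring_time \<omega> k" "ring_time \<omega> k \<le> s" unfolding A_def Sset_def by blast
          then show "a < s" using notT by (metis order_le_imp_less_or_eq)
        qed
        define lo where "lo = Max (insert c (insert 0 A))"
        have lo_lt: "lo < s" unfolding lo_def using finA Als cs s0 by (subst Max_less_iff) auto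
        obtain q where q: "lo < of_rat q" "of_rat q < s"
          using of_rat_dense[OF lo_lt] by blast
        have fin2: "finite (insert c (insert 0 A))" using finA by simp
        have ge: "c \<le> lo" "0 \<le> lo" "\<forall>a\<in>A. a \<le> lo" unfolding lo_def
          using Max_ge[OF fin2, of c] Max_ge[OF fin2, of 0] Max_ge[OF fin2] by auto
        have Seq: "Sset \<omega> (of_rat q) = Sset \<omega> s"
        proof
          show "Sset \<omega> (of_rat q) \<subseteq> Sset \<omega> s" using Sset_mono[of "of_rat q" s \<omega>] q by simp
          show "Sset \<omega> s \<subseteq> Sset \<omega> (of_rat q)"
          proof
            fix k assume k: "k \<in> Sset \<omega> s"
            then have "ring_time \<omega> k \<in> A" unfolding A_def by blast
            then have "ring_time \<omega> k \<le> lo" using ge(3) by blast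
            then have "ring_time \<omega> k < of_rat q" using q(1) by linarith
            then show "k \<in> Sset \<omega> (of_rat q)" using k unfolding Sset_def by auto
          qed
        qed
        have "gapX b0 b1 b2 \<omega> j (of_rat q) = 0" using gapX_Sset[OF Seq, of b0 b1 b2 j] sZ unfolding Z_def by simp
        moreover have "(0::real) \<le> of_rat q" using q ge by linarith
        moreover have "(of_rat q::real) \<le> t" using q sZ unfolding Z_def by simp
        ultimately have "of_rat q \<in> Z" unfolding Z_def by simp
        then show ?thesis using q ge by (intro disjI1 exI[of _ q]) auto
      qed
    qed
  qed
next
  assume "(\<exists>q::rat. of_rat q \<in> Z \<and> c < of_rat q) \<or> (\<exists>k. ring_time \<omega> k \<in> Z \<and> c < ring_time \<omega> k)
    \<or> (infinite (Sset \<omega> t) \<and> c < t \<and> 0 \<le> t)"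
  then show "\<exists>s\<in>Z. c < s"
  proof (elim disjE exE conjE)
    fix q :: rat assume "of_rat q \<in> Z" "c < of_rat q" then show ?thesis by blast
  next
    fix k assume "ring_time \<omega> k \<in> Z" "c < ring_time \<omega> k" then show ?thesis by blast
  next
    assume "infinite (Sset \<omega> t)" "c < t" "0 \<le> t"
    then have "t \<in> Z" using gapX_inf[of \<omega> t b0 b1 b2 j] unfolding Z_def by simp
    then show ?thesis using \<open>c < t\<close> by blast
  qed
qed

lemma meas_infS[measurable]:
  "Measurable.pred (crystal_space n b1) (\<lambda>\<omega>. infinite (Sset \<omega> t))"
proof -
  have fin: "(\<lambda>\<omega>. infinite (Sset \<omega> t)) = (\<lambda>\<omega>. \<not> (\<exists>K. \<forall>k\<ge>K. \<not> (0 < k \<and> ring_time \<omega> k \<le> t)))"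
  proof
    fix \<omega>
    show "infinite (Sset \<omega> t) = (\<not> (\<exists>K. \<forall>k\<ge>K. \<not> (0 < k \<and> ring_time \<omega> k \<le> t)))"
      unfolding Sset_def by (metis (no_types, lifting) finite_nat_set_iff_bounded leD le_less_linear mem_Collect_eq)
  qed
  show ?thesis unfolding fin by measurable
qed

lemma meas_exZ[measurable]:
  "Measurable.pred (crystal_space n b1) (\<lambda>\<omega>. \<exists>s. (0 \<le> s \<and> s \<le> t \<and> gapX b0 b1 b2 \<omega> j s = 0) \<and> c < s)"
proof -
  have eq: "(\<lambda>\<omega>. \<exists>s. (0 \<le> s \<and> s \<le> t \<and> gapX b0 b1 b2 \<omega> j s = 0) \<and> c < s) = (\<lambda>\<omega>.
    (\<exists>q::rat. ((0::real) \<le> of_rat q \<and> of_rat q \<le> t \<and> gapX b0 b1 b2 \<omega> j (of_rat q) = 0) \<and> c < of_rat q) \<or>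
    (\<exists>k. (0 \<le> ring_time \<omega> k \<and> ring_time \<omega> k \<le> t \<and> gapX b0 b1 b2 \<omega> j (ring_time \<omega> k) = 0) \<and> c < ring_time \<omega> k)
    \<or> (infinite (Sset \<omega> t) \<and> c < t \<and> 0 \<le> t))"
  proof
    fix \<omega>
    show "(\<exists>s. (0 \<le> s \<and> s \<le> t \<and> gapX b0 b1 b2 \<omega> j s = 0) \<and> c < s) = (
    (\<exists>q::rat. ((0::real) \<le> of_rat q \<and> of_rat q \<le> t \<and> gapX b0 b1 b2 \<omega> j (of_rat q) = 0) \<and> c < of_rat q) \<or>
    (\<exists>k. (0 \<le> ring_time \<omega> k \<and> ring_time \<omega> k \<le> t \<and> gapX b0 b1 b2 \<omega> j (ring_time \<omega> k) = 0) \<and> c < ring_time \<omega> k)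
    \<or> (infinite (Sset \<omega> t) \<and> c < t \<and> 0 \<le> t))"
      using exists_Z_char[of t b0 b1 b2 \<omega> j c] unfolding Bex_def mem_Collect_eq .
  qed
  have [measurable]: "Measurable.pred (crystal_space n b1) (\<lambda>\<omega>. gapX b0 b1 b2 \<omega> j (ring_time \<omega> k) = 0)" for k
    using measurable_compose[OF meas_gap[where r="\<lambda>\<omega>. ring_time \<omega> k" and ?b0.0=b0 and ?b2.0=b2 and j=j, OF meas_T], of "\<lambda>x. x = 0" "count_space UNIV"]
    by simp
  have [measurable]: "Measurable.pred (crystal_space n b1) (\<lambda>\<omega>. gapX b0 b1 b2 \<omega> j r = 0)" for r
    using measurable_compose[OF meas_gap[where r="\<lambda>\<omega>. r" and ?b0.0=b0 and ?b2.0=b2 and j=j, OF borel_measurable_const], of "\<lambda>x. x = 0" "count_space UNIV"]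
    by simp
  show ?thesis unfolding eq by measurable
qed

lemma meas_tau[measurable]:
  "(\<lambda>\<omega>. tauX b0 b1 b2 \<omega> j t) \<in> borel_measurable (crystal_space n b1)"
proof (subst borel_measurable_iff_greater, intro allI)
  fix c :: real
  let ?Z = "\<lambda>\<omega>. {s. 0 \<le> s \<and> s \<le> t \<and> gapX b0 b1 b2 \<omega> j s = 0}"
  have "{w \<in> space (crystal_space n b1). c < tauX b0 b1 b2 w j t} =
    {w \<in> space (crystal_space n b1). ((\<exists>s. (0 \<le> s \<and> s \<le> t \<and> gapX b0 b1 b2 w j s = 0) \<and> -1 < s) \<and>
        (\<exists>s. (0 \<le> s \<and> s \<le> t \<and> gapX b0 b1 b2 w j s = 0) \<and> c < s)) \<or>
       (\<not> (\<exists>s. (0 \<le> s \<and> s \<le> t \<and> gapX b0 b1 b2 w j s = 0) \<and> -1 < s) \<and> c < Sup ({}::real set))}"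
  proof (intro Collect_cong conj_cong refl)
    fix w
    have bdd: "bdd_above (?Z w)" by (intro bdd_aboveI[of _ t]) auto
    show "(c < tauX b0 b1 b2 w j t) = (((\<exists>s. (0 \<le> s \<and> s \<le> t \<and> gapX b0 b1 b2 w j s = 0) \<and> -1 < s) \<and>
        (\<exists>s. (0 \<le> s \<and> s \<le> t \<and> gapX b0 b1 b2 w j s = 0) \<and> c < s)) \<or>
       (\<not> (\<exists>s. (0 \<le> s \<and> s \<le> t \<and> gapX b0 b1 b2 w j s = 0) \<and> -1 < s) \<and> c < Sup ({}::real set)))"
    proof (cases "?Z w = {}")
      case True
      then have nex: "\<not> (\<exists>s. (0 \<le> s \<and> s \<le> t \<and> gapX b0 b1 b2 w j s = 0) \<and> -1 < s)" by blast
      have nex2: "\<not> (\<exists>s. (0 \<le> s \<and> s \<le> t \<and> gapX b0 b1 b2 w j s = 0) \<and> c < s)" using True by blast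
      show ?thesis unfolding tauX_def True using nex nex2 by blast
    next
      case False
      then have ex: "\<exists>s. (0 \<le> s \<and> s \<le> t \<and> gapX b0 b1 b2 w j s = 0) \<and> -1 < s" by force
      show ?thesis unfolding tauX_def using less_cSup_iff[OF False bdd, of c] ex by auto
    qed
  qed
  also have "\<dots> \<in> sets (crystal_space n b1)" by measurable
  finally show "{w \<in> space (crystal_space n b1). c < tauX b0 b1 b2 w j t} \<in> sets (crystal_space n b1)" .
qed

definition fidx :: "(real \<times> nat \<times> real) stream \<Rightarrow> real \<Rightarrow> nat \<Rightarrow> bool" where
  "fidx \<omega> a i \<longleftrightarrow> a \<le> ring_time \<omega> i \<and> (\<forall>i'<i. ring_time \<omega> i' < a)"

definition Bsum :: "(real \<times> nat \<times> real) stream \<Rightarrow> nat \<Rightarrow> real" where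
  "Bsum \<omega> m = (\<Sum>i<m. fst (\<omega> !! i))"

lemma ring_time_Suc: "ring_time \<omega> (Suc i) = ring_time \<omega> i + fst (\<omega> !! i)"
  unfolding ring_time_def by simp

lemma ring_time_0[simp]: "ring_time \<omega> 0 = 0"
  unfolding ring_time_def by simp

lemma Bsum_sdrop: "Bsum (sdrop i \<omega>) m = ring_time \<omega> (i + m) - ring_time \<omega> i"
  by (induction m) (simp_all add: Bsum_def ring_time_Suc sdrop_snth)

context
  fixes \<omega> :: "(real \<times> nat \<times> real) stream"
  assumes pos: "\<forall>i. 0 < fst (\<omega> !! i)"
begin

lemma T_strict: "i < i' \<Longrightarrow> ring_time \<omega> i < ring_time \<omega> i'"
proof (induction i' rule: less_induct)
  case (less x)
  then obtain y where y: "x = Suc y" by (cases x) auto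
  have "ring_time \<omega> y < ring_time \<omega> x" using pos by (simp add: y ring_time_Suc)
  moreover have "i = y \<or> i < y" using less.prems y by auto
  ultimately show ?case using less.IH[of y] y by auto
qed

lemma T_mono: "i \<le> i' \<Longrightarrow> ring_time \<omega> i \<le> ring_time \<omega> i'"
  using T_strict by (cases "i = i'") (auto intro: less_imp_le)

lemma T_pos: "0 < k \<Longrightarrow> 0 < ring_time \<omega> k"
  using T_strict[of 0 k] by simp

lemma Sset_eq:
  assumes fin: "finite {k. 0 < k \<and> ring_time \<omega> k \<le> s}"
  shows "{k. 0 < k \<and> ring_time \<omega> k \<le> s} = {1..card {k. 0 < k \<and> ring_time \<omega> k \<le> s}}"
proof (cases "{k. 0 < k \<and> ring_time \<omega> k \<le> s} = {}")
  case True then show ?thesis unfolding True by simp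
next
  case False
  let ?S = "{k. 0 < k \<and> ring_time \<omega> k \<le> s}"
  define M where "M = Max ?S"
  have MS: "M \<in> ?S" using Max_in[OF fin False] M_def by simp
  have "?S = {1..M}"
  proof
    show "?S \<subseteq> {1..M}" using Max_ge[OF fin] M_def by fastforce
    show "{1..M} \<subseteq> ?S"
    proof
      fix k assume "k \<in> {1..M}"
      then have "0 < k" "k \<le> M" by auto
      then show "k \<in> ?S" using MS T_mono[of k M] by auto
    qed
  qed
  then show ?thesis by simp
qed

definition G :: "real \<Rightarrow> real \<Rightarrow> real \<Rightarrow> nat \<Rightarrow> nat \<Rightarrow> int" where
  "G b0 b1 b2 j m = int (jchain b0 b1 b2 \<omega> m j) - int (jchain b0 b1 b2 \<omega> m (j + 1))"

lemma G_0: "G b0 b1 b2 j 0 = 0"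
  unfolding G_def by (simp add: zero_conf_def)

lemma G_step: "G b0 b1 b2 j (Suc m) - G b0 b1 b2 j m \<le> 1"
  unfolding G_def by (auto simp: Let_def)

lemma G_diff: "p \<le> m \<Longrightarrow> G b0 b1 b2 j m - G b0 b1 b2 j p \<le> int (m - p)"
proof (induction m)
  case 0 then show ?case by simp
next
  case (Suc m)
  show ?case
  proof (cases "p = Suc m")
    case True then show ?thesis by simp
  next
    case False
    then have "p \<le> m" using Suc.prems by simp
    then show ?thesis using Suc.IH G_step[of b0 b1 b2 j m] by (simp add: Suc_diff_le)
  qed
qed

lemma gapX_G: "gapX b0 b1 b2 \<omega> j s = G b0 b1 b2 j (nrings \<omega> s)"
  unfolding gapX_def G_def crystal_def by simp

lemma comb:
  fixes K :: nat
  assumes K: "1 \<le> K" and g: "int K \<le> gapX b0 b1 b2 \<omega> j t"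
  shows "0 \<le> tauX b0 b1 b2 \<omega> j t \<and> tauX b0 b1 b2 \<omega> j t \<le> t \<and>
    (\<forall>a. a \<le> tauX b0 b1 b2 \<omega> j t \<longrightarrow> (\<exists>i. fidx \<omega> a i \<and> Bsum (sdrop i \<omega>) (K - 1) \<le> t - a))"
proof -
  define m where "m = nrings \<omega> t"
  define Gf where "Gf = G b0 b1 b2 j"
  have Gm: "int K \<le> Gf m" using g gapX_G unfolding m_def Gf_def by simp
  have m0: "m \<noteq> 0"
  proof
    assume "m = 0"
    then have "Gf m = 0" using G_0 unfolding Gf_def by simp
    then show False using Gm K by simp
  qed
  have fin: "finite {k. 0 < k \<and> ring_time \<omega> k \<le> t}"
    using m0 unfolding m_def nrings_def by (meson card.infinite)
  have St: "{k. 0 < k \<and> ring_time \<omega> k \<le> t} = {1..m}"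
    using Sset_eq[OF fin] unfolding m_def nrings_def .
  have "m \<in> {1..m}" using m0 by simp
  then have Tm: "ring_time \<omega> m \<le> t" unfolding St[symmetric] by simp
  define p where "p = (GREATEST p'. p' \<le> m \<and> Gf p' = 0)"
  have pex: "p \<le> m \<and> Gf p = 0"
    unfolding p_def by (rule GreatestI_nat[of _ 0 m]) (auto simp: Gf_def G_0)
  have pmax: "p' \<le> m \<Longrightarrow> Gf p' = 0 \<Longrightarrow> p' \<le> p" for p'
    unfolding p_def by (rule Greatest_le_nat[of _ _ m]) auto
  have d: "Gf m - Gf p \<le> int (m - p)" using G_diff[of p m b0 b1 b2 j] pex unfolding Gf_def by simp
  have d2: "int (m - p) = int m - int p" using pex by simp
  have Kmp: "p + K \<le> m" using d d2 Gm pex by linarith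
  define Z where "Z = {s. 0 \<le> s \<and> s \<le> t \<and> gapX b0 b1 b2 \<omega> j s = 0}"
  have tau: "tauX b0 b1 b2 \<omega> j t = Sup Z" unfolding tauX_def Z_def by (rule refl)
  have "0 < ring_time \<omega> m" using m0 by (intro T_pos) simp
  then have t0: "0 \<le> t" using Tm by linarith
  have "nrings \<omega> 0 = 0"
  proof -
    have "\<not> ring_time \<omega> k \<le> 0" if "0 < k" for k using T_pos[OF that] by linarith
    then have E0: "{k. 0 < k \<and> ring_time \<omega> k \<le> 0} = {}" by auto
    show ?thesis unfolding nrings_def E0 by simp
  qed
  then have Z0: "0 \<in> Z" unfolding Z_def using t0 gapX_G G_0 by simp
  have bdd: "bdd_above Z" unfolding Z_def by (intro bdd_aboveI[of _ t]) auto
  have Zlt: "s < ring_time \<omega> (Suc p)" if "s \<in> Z" for s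
  proof (rule ccontr)
    assume "\<not> s < ring_time \<omega> (Suc p)"
    then have sge: "ring_time \<omega> (Suc p) \<le> s" by simp
    have st: "s \<le> t" and g0: "gapX b0 b1 b2 \<omega> j s = 0" using that unfolding Z_def by auto
    have sub: "{k. 0 < k \<and> ring_time \<omega> k \<le> s} \<subseteq> {k. 0 < k \<and> ring_time \<omega> k \<le> t}" using st by auto
    then have fins: "finite {k. 0 < k \<and> ring_time \<omega> k \<le> s}" using fin finite_subset by blast
    have Ss: "{k. 0 < k \<and> ring_time \<omega> k \<le> s} = {1..nrings \<omega> s}"
      using Sset_eq[OF fins] unfolding nrings_def .
    have "Suc p \<in> {k. 0 < k \<and> ring_time \<omega> k \<le> s}" using sge by simp
    then have "Suc p \<le> nrings \<omega> s" using Ss by auto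
    moreover have "nrings \<omega> s \<le> m" unfolding m_def nrings_def by (rule card_mono[OF fin sub])
    moreover have "Gf (nrings \<omega> s) = 0" using g0 gapX_G unfolding Gf_def by simp
    ultimately show False using pmax[of "nrings \<omega> s"] by simp
  qed
  have tau0: "0 \<le> Sup Z" using cSup_upper[OF Z0 bdd] .
  have taut: "Sup Z \<le> t" using Z0 by (intro cSup_least) (auto simp: Z_def)
  have tauT: "Sup Z \<le> ring_time \<omega> (Suc p)" using Z0 Zlt by (intro cSup_least) (auto intro: less_imp_le)
  have main: "\<exists>i. fidx \<omega> a i \<and> Bsum (sdrop i \<omega>) (K - 1) \<le> t - a" if a: "a \<le> Sup Z" for a
  proof -
    define i0 where "i0 = (LEAST i. a \<le> ring_time \<omega> i)"
    have ex: "a \<le> ring_time \<omega> (Suc p)" using a tauT by simp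
    have i0a: "a \<le> ring_time \<omega> i0" unfolding i0_def by (rule LeastI[of _ "Suc p"]) (rule ex)
    have i0le: "i0 \<le> Suc p" unfolding i0_def by (rule Least_le) (rule ex)
    have before: "\<forall>i'<i0. ring_time \<omega> i' < a"
      using not_less_Least[of _ "\<lambda>i. a \<le> ring_time \<omega> i"] unfolding i0_def by (auto simp: not_le)
    have "Bsum (sdrop i0 \<omega>) (K - 1) = ring_time \<omega> (i0 + (K - 1)) - ring_time \<omega> i0" by (rule Bsum_sdrop)
    also have "\<dots> \<le> ring_time \<omega> m - a"
    proof -
      have "i0 + (K - 1) \<le> m" using i0le Kmp K by arith
      then have "ring_time \<omega> (i0 + (K - 1)) \<le> ring_time \<omega> m" by (rule T_mono)
      then show ?thesis using i0a by linarith
    qed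
    also have "\<dots> \<le> t - a" using Tm by simp
    finally show ?thesis using i0a before unfolding fidx_def by blast
  qed
  show ?thesis unfolding tau using tau0 taut main by blast
qed

end

context
  fixes n :: nat and b1 :: real
  assumes n_pos: "0 < n" and b1_pos: "0 < b1"
begin

abbreviation "lam \<equiv> real n * b1"
abbreviation "Dm \<equiv> density lborel (\<lambda>e. ennreal (exponential_density (real n * b1) e))"
abbreviation "Rm \<equiv> measure_pmf (pmf_of_set {1..n}) \<Otimes>\<^sub>M uniform_measure lborel {0..1::real}"

lemma lam_pos: "0 < lam" using n_pos b1_pos by simp

lemma PD: "prob_space Dm"
  using prob_space_exponential_density[OF lam_pos] by simp

lemma PR: "prob_space Rm"
proof -
  have 2: "prob_space (uniform_measure lborel {0..1::real})"
    by (intro prob_space_uniform_measure) auto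
  show ?thesis by (rule prob_space_pair[OF prob_space_measure_pmf 2])
qed

lemma M_eq: "mark_measure n b1 = Dm \<Otimes>\<^sub>M Rm" unfolding mark_measure_def ..

lemma PM: "prob_space (mark_measure n b1)"
  unfolding M_eq by (rule prob_space_pair[OF PD PR])

lemma S_eq: "crystal_space n b1 = stream_space (mark_measure n b1)" unfolding crystal_space_def ..

lemma PS: "prob_space (crystal_space n b1)"
  unfolding S_eq by (rule prob_space.prob_space_stream_space[OF PM])

lemma distr_fst: "distr (mark_measure n b1) Dm fst = Dm"
  unfolding M_eq by (rule prob_space.distr_pair_fst[OF PR])

lemma nn_fst:
  assumes [measurable]: "f \<in> borel_measurable borel"
  shows "(\<integral>\<^sup>+x. f (fst x) \<partial>mark_measure n b1) = (\<integral>\<^sup>+x. f x \<partial>Dm)"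
proof -
  have "(\<integral>\<^sup>+x. f x \<partial>Dm) = (\<integral>\<^sup>+x. f x \<partial>distr (mark_measure n b1) Dm fst)" by (simp add: distr_fst)
  also have "\<dots> = (\<integral>\<^sup>+x. f (fst x) \<partial>mark_measure n b1)"
    by (rule nn_integral_distr) (auto simp: M_eq)
  finally show ?thesis ..
qed

lemma AE_D: "AE x in Dm. 0 < x"
proof (subst AE_density)
  show "(\<lambda>e. ennreal (exponential_density lam e)) \<in> borel_measurable lborel" by measurable
  show "AE x in lborel. 0 < ennreal (exponential_density lam x) \<longrightarrow> 0 < x"
    using AE_lborel_singleton[of "0::real"]
    by eventually_elim (auto simp: exponential_density_def split: if_splits)
qed

lemma AE_M: "AE x in mark_measure n b1. 0 < fst x"
proof -
  have "AE x in distr (mark_measure n b1) Dm fst. 0 < x" unfolding distr_fst by (rule AE_D)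
  then show ?thesis by (subst (asm) AE_distr_iff) (auto simp: M_eq)
qed

lemma AE_pos: "AE \<omega> in crystal_space n b1. \<forall>i. 0 < fst (\<omega> !! i)"
proof -
  have "AE x in stream_space (mark_measure n b1). stream_all (\<lambda>x. 0 < fst x) x"
    by (rule prob_space.AE_stream_all[OF PM _ AE_M]) (simp add: M_eq)
  then show ?thesis unfolding S_eq stream_all_def by simp
qed

lemma mgf_D: "(\<integral>\<^sup>+x. ennreal (exp (- lam * x)) \<partial>Dm) = ennreal (1/2)"
proof -
  have "(\<integral>\<^sup>+x. ennreal (exp (- lam * x)) \<partial>Dm) =
      (\<integral>\<^sup>+x. ennreal (exponential_density lam x) * ennreal (exp (- lam * x)) \<partial>lborel)"
    by (rule nn_integral_density) measurable
  also have "\<dots> = (\<integral>\<^sup>+x. ennreal (1/2) * ennreal (exponential_density (2 * lam) x) \<partial>lborel)"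
  proof (rule nn_integral_cong)
    fix x :: real
    have "exponential_density lam x * exp (- lam * x) = 1/2 * exponential_density (2 * lam) x"
      by (auto simp: exponential_density_def mult_exp_exp algebra_simps)
    note heq = this
    have nn: "0 \<le> exponential_density lam x" "0 \<le> exponential_density (2 * lam) x"
      using lam_pos by (auto intro: exponential_density_nonneg)
    have "ennreal (exponential_density lam x) * ennreal (exp (- lam * x)) =
        ennreal (exponential_density lam x * exp (- lam * x))"
      by (rule ennreal_mult[symmetric]) (use nn in auto)
    also have "\<dots> = ennreal (1/2 * exponential_density (2 * lam) x)" by (simp only: heq)
    also have "\<dots> = ennreal (1/2) * ennreal (exponential_density (2 * lam) x)"
      by (rule ennreal_mult) (use nn in auto)
    finally show "ennreal (exponential_density lam x) * ennreal (exp (- lam * x)) =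
        ennreal (1/2) * ennreal (exponential_density (2 * lam) x)" .
  qed
  also have "\<dots> = ennreal (1/2) * (\<integral>\<^sup>+x. ennreal (exponential_density (2 * lam) x) \<partial>lborel)"
    by (rule nn_integral_cmult) measurable
  also have "(\<integral>\<^sup>+x. ennreal (exponential_density (2 * lam) x) \<partial>lborel) = 1"
  proof -
    have P2: "prob_space (density lborel (exponential_density (2 * lam)))"
      by (rule prob_space_exponential_density) (use lam_pos in simp)
    have "(\<integral>\<^sup>+x. 1 \<partial>density lborel (exponential_density (2 * lam))) =
        (\<integral>\<^sup>+x. ennreal (exponential_density (2 * lam) x) * 1 \<partial>lborel)"
      by (rule nn_integral_density) measurable
    moreover have "(\<integral>\<^sup>+x. 1 \<partial>density lborel (exponential_density (2 * lam))) = 1"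
      using prob_space.emeasure_space_1[OF P2] by simp
    ultimately show ?thesis by simp
  qed
  finally show ?thesis by simp
qed

lemma mgf_M: "(\<integral>\<^sup>+x. ennreal (exp (- lam * fst x)) \<partial>mark_measure n b1) = ennreal (1/2)"
  using nn_fst[of "\<lambda>x. ennreal (exp (- lam * x))"] mgf_D by simp

lemma Bsum_Cons: "Bsum (x ## \<omega>) (Suc m) = fst x + Bsum \<omega> m"
  unfolding Bsum_def by (subst sum.lessThan_Suc_shift) simp

lemma meas_Bsum[measurable]: "(\<lambda>\<omega>. Bsum \<omega> m) \<in> borel_measurable (stream_space (mark_measure n b1))"
  unfolding Bsum_def M_eq by measurable

lemma Bsum_mgf: "(\<integral>\<^sup>+\<omega>. ennreal (exp (- lam * Bsum \<omega> m)) \<partial>stream_space (mark_measure n b1)) = ennreal ((1/2)^m)"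
proof (induction m)
  case 0
  interpret P: prob_space "stream_space (mark_measure n b1)" using PS S_eq by simp
  show ?case by (simp add: Bsum_def P.emeasure_space_1)
next
  case (Suc m)
  have "(\<integral>\<^sup>+\<omega>. ennreal (exp (- lam * Bsum \<omega> (Suc m))) \<partial>stream_space (mark_measure n b1)) =
    (\<integral>\<^sup>+x. (\<integral>\<^sup>+\<omega>. ennreal (exp (- lam * Bsum (x ## \<omega>) (Suc m))) \<partial>stream_space (mark_measure n b1)) \<partial>mark_measure n b1)"
    by (rule prob_space.nn_integral_stream_space[OF PM]) measurable
  also have "\<dots> = (\<integral>\<^sup>+x. ennreal (exp (- lam * fst x)) * (\<integral>\<^sup>+\<omega>. ennreal (exp (- lam * Bsum \<omega> m)) \<partial>stream_space (mark_measure n b1)) \<partial>mark_measure n b1)"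
  proof (rule nn_integral_cong)
    fix x :: "real \<times> nat \<times> real"
    have "(\<integral>\<^sup>+\<omega>. ennreal (exp (- lam * Bsum (x ## \<omega>) (Suc m))) \<partial>stream_space (mark_measure n b1)) =
      (\<integral>\<^sup>+\<omega>. ennreal (exp (- lam * fst x)) * ennreal (exp (- lam * Bsum \<omega> m)) \<partial>stream_space (mark_measure n b1))"
    proof (rule nn_integral_cong)
      fix \<omega> :: "(real \<times> nat \<times> real) stream"
      have "exp (- lam * Bsum (x ## \<omega>) (Suc m)) = exp (- lam * fst x) * exp (- lam * Bsum \<omega> m)"
        unfolding Bsum_Cons by (simp only: distrib_left exp_add)
      then show "ennreal (exp (- lam * Bsum (x ## \<omega>) (Suc m))) = ennreal (exp (- lam * fst x)) * ennreal (exp (- lam * Bsum \<omega> m))"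
        by (simp add: ennreal_mult)
    qed
    also have "\<dots> = ennreal (exp (- lam * fst x)) * (\<integral>\<^sup>+\<omega>. ennreal (exp (- lam * Bsum \<omega> m)) \<partial>stream_space (mark_measure n b1))"
      by (rule nn_integral_cmult) measurable
    finally show "(\<integral>\<^sup>+\<omega>. ennreal (exp (- lam * Bsum (x ## \<omega>) (Suc m))) \<partial>stream_space (mark_measure n b1)) =
      ennreal (exp (- lam * fst x)) * (\<integral>\<^sup>+\<omega>. ennreal (exp (- lam * Bsum \<omega> m)) \<partial>stream_space (mark_measure n b1))" .
  qed
  also have "\<dots> = (\<integral>\<^sup>+x. ennreal (exp (- lam * fst x)) \<partial>mark_measure n b1) * ennreal ((1/2)^m)"
    unfolding Suc.IH by (rule nn_integral_multc) (simp add: M_eq)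
  also have "\<dots> = ennreal ((1/2) ^ Suc m)"
    unfolding mgf_M power_Suc by (rule ennreal_mult[symmetric]) auto
  finally show ?case .
qed

lemma Bsum_tail:
  "emeasure (crystal_space n b1) {\<omega> \<in> space (crystal_space n b1). Bsum \<omega> m \<le> w} \<le> ennreal (exp (lam * w) * (1/2)^m)"
proof -
  have "emeasure (crystal_space n b1) {\<omega> \<in> space (crystal_space n b1). Bsum \<omega> m \<le> w} =
    (\<integral>\<^sup>+\<omega>. indicator {\<omega> \<in> space (crystal_space n b1). Bsum \<omega> m \<le> w} \<omega> \<partial>crystal_space n b1)"
    by (rule nn_integral_indicator[symmetric]) (simp add: S_eq)
  also have "\<dots> \<le> (\<integral>\<^sup>+\<omega>. ennreal (exp (lam * w)) * ennreal (exp (- lam * Bsum \<omega> m)) \<partial>crystal_space n b1)"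
  proof (rule nn_integral_mono)
    fix \<omega>
    show "indicator {\<omega> \<in> space (crystal_space n b1). Bsum \<omega> m \<le> w} \<omega> \<le> ennreal (exp (lam * w)) * ennreal (exp (- lam * Bsum \<omega> m))"
    proof (cases "Bsum \<omega> m \<le> w")
      case True
      have e: "exp (lam * w) * exp (- lam * Bsum \<omega> m) = exp (lam * (w - Bsum \<omega> m))"
        by (simp only: exp_add[symmetric] right_diff_distrib) simp
      have "0 \<le> lam * (w - Bsum \<omega> m)" using True lam_pos by simp
      then have "1 \<le> exp (lam * w) * exp (- lam * Bsum \<omega> m)" unfolding e by simp
      then have "ennreal 1 \<le> ennreal (exp (lam * w)) * ennreal (exp (- lam * Bsum \<omega> m))"
        by (simp add: ennreal_mult''[symmetric] ennreal_leI del: ennreal_1)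
      then show ?thesis by (auto split: split_indicator)
    next
      case False then show ?thesis by (auto split: split_indicator)
    qed
  qed
  also have "\<dots> = ennreal (exp (lam * w)) * (\<integral>\<^sup>+\<omega>. ennreal (exp (- lam * Bsum \<omega> m)) \<partial>crystal_space n b1)"
    by (rule nn_integral_cmult) (simp add: S_eq)
  also have "\<dots> = ennreal (exp (lam * w)) * ennreal ((1/2)^m)"
    unfolding S_eq Bsum_mgf ..
  also have "\<dots> = ennreal (exp (lam * w) * (1/2)^m)" by (simp add: ennreal_mult'')
  finally show ?thesis .
qed

abbreviation "SM \<equiv> stream_space (mark_measure n b1)"

lemma space_M: "space (mark_measure n b1) = UNIV"
  unfolding M_eq by (simp add: space_pair_measure)

lemma space_SM: "space SM = UNIV"
  by (simp add: space_stream_space space_M)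

lemma meas_T_SM[measurable]: "(\<lambda>\<omega>. ring_time \<omega> k) \<in> borel_measurable SM"
  using meas_T[of k n b1] by (simp add: S_eq)

lemma meas_fst_M[measurable]: "fst \<in> borel_measurable (mark_measure n b1)"
  unfolding M_eq by measurable

lemma meas_fidx[measurable]: "Measurable.pred SM (\<lambda>\<omega>. fidx \<omega> a i)"
  unfolding fidx_def by measurable

lemma meas_fidx2[measurable]:
  "Measurable.pred (mark_measure n b1 \<Otimes>\<^sub>M SM) (\<lambda>(x, \<omega>). fidx \<omega> (a - fst x) i)"
  unfolding fidx_def by measurable

lemma ring_time_Cons: "ring_time (x ## \<omega>) (Suc i) = fst x + ring_time \<omega> i"
  unfolding ring_time_def by (subst sum.lessThan_Suc_shift) simp

lemma fidx_Cons0: "fidx (x ## \<omega>) a 0 \<longleftrightarrow> a \<le> 0"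
  unfolding fidx_def by simp

lemma fidx_ConsS: "fidx (x ## \<omega>) a (Suc i) \<longleftrightarrow> 0 < a \<and> fidx \<omega> (a - fst x) i"
  unfolding fidx_def All_less_Suc2 ring_time_Cons by auto

definition Pf :: "nat \<Rightarrow> real \<Rightarrow> ennreal" where
  "Pf i a = (\<integral>\<^sup>+\<omega>. indicator {\<omega>. fidx \<omega> a i} \<omega> \<partial>SM)"

lemma meas_Pf[measurable]: "(\<lambda>x. Pf i (a - fst x)) \<in> borel_measurable (mark_measure n b1)"
proof -
  interpret S: prob_space SM by (rule prob_space.prob_space_stream_space[OF PM])
  have "(\<lambda>x. \<integral>\<^sup>+\<omega>. indicator {\<omega>. fidx \<omega> (a - fst x) i} \<omega> \<partial>SM) \<in> borel_measurable (mark_measure n b1)"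
  proof (rule S.borel_measurable_nn_integral)
    have "(\<lambda>(x, \<omega>). indicator {\<omega>. fidx \<omega> (a - fst x) i} \<omega> :: ennreal) =
          (\<lambda>p. indicator {p. (\<lambda>(x, \<omega>). fidx \<omega> (a - fst x) i) p} p)"
      by (auto simp: fun_eq_iff split: split_indicator)
    also have "\<dots> \<in> borel_measurable (mark_measure n b1 \<Otimes>\<^sub>M SM)"
      by (rule borel_measurable_indicator) (use meas_fidx2[of a i] in \<open>simp add: pred_def space_pair_measure space_SM space_M\<close>)
    finally show "(\<lambda>(x, \<omega>). indicator {\<omega>. fidx \<omega> (a - fst x) i} \<omega> :: ennreal) \<in> borel_measurable (mark_measure n b1 \<Otimes>\<^sub>M SM)" .
  qed
  then show ?thesis unfolding Pf_def .
qed

lemma chain_step: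
  assumes g[measurable]: "g \<in> borel_measurable SM"
  shows "(\<integral>\<^sup>+\<omega>. indicator {\<omega>. fidx \<omega> a (Suc i)} \<omega> * g (sdrop (Suc i) \<omega>) \<partial>SM) =
    (\<integral>\<^sup>+x. indicator {a'. 0 < a'} a * (\<integral>\<^sup>+\<omega>. indicator {\<omega>. fidx \<omega> (a - fst x) i} \<omega> * g (sdrop i \<omega>) \<partial>SM) \<partial>mark_measure n b1)"
proof -
  have m1: "(\<lambda>\<omega>. indicator {\<omega>. fidx \<omega> a (Suc i)} \<omega> * g (sdrop (Suc i) \<omega>)) \<in> borel_measurable SM"
    using meas_fidx[of a "Suc i"] by (intro borel_measurable_times_ennreal borel_measurable_indicator) 
      (auto simp: pred_def space_SM)
  have "(\<integral>\<^sup>+\<omega>. indicator {\<omega>. fidx \<omega> a (Suc i)} \<omega> * g (sdrop (Suc i) \<omega>) \<partial>SM) =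
    (\<integral>\<^sup>+x. (\<integral>\<^sup>+\<omega>. indicator {\<omega>. fidx \<omega> a (Suc i)} (x ## \<omega>) * g (sdrop (Suc i) (x ## \<omega>)) \<partial>SM) \<partial>mark_measure n b1)"
    by (rule prob_space.nn_integral_stream_space[OF PM m1])
  also have "\<dots> = (\<integral>\<^sup>+x. indicator {a'. 0 < a'} a * (\<integral>\<^sup>+\<omega>. indicator {\<omega>. fidx \<omega> (a - fst x) i} \<omega> * g (sdrop i \<omega>) \<partial>SM) \<partial>mark_measure n b1)"
  proof (rule nn_integral_cong)
    fix x :: "real \<times> nat \<times> real"
    have m2: "(\<lambda>\<omega>. indicator {\<omega>. fidx \<omega> (a - fst x) i} \<omega> * g (sdrop i \<omega>)) \<in> borel_measurable SM"
      using meas_fidx[of "a - fst x" i] by (intro borel_measurable_times_ennreal borel_measurable_indicator) 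
        (auto simp: pred_def space_SM)
    have "(\<integral>\<^sup>+\<omega>. indicator {\<omega>. fidx \<omega> a (Suc i)} (x ## \<omega>) * g (sdrop (Suc i) (x ## \<omega>)) \<partial>SM) =
      (\<integral>\<^sup>+\<omega>. indicator {a'. 0 < a'} a * (indicator {\<omega>. fidx \<omega> (a - fst x) i} \<omega> * g (sdrop i \<omega>)) \<partial>SM)"
      by (rule nn_integral_cong) (simp add: fidx_ConsS split: split_indicator)
    also have "\<dots> = indicator {a'. 0 < a'} a * (\<integral>\<^sup>+\<omega>. indicator {\<omega>. fidx \<omega> (a - fst x) i} \<omega> * g (sdrop i \<omega>) \<partial>SM)"
      by (rule nn_integral_cmult[OF m2])
    finally show "(\<integral>\<^sup>+\<omega>. indicator {\<omega>. fidx \<omega> a (Suc i)} (x ## \<omega>) * g (sdrop (Suc i) (x ## \<omega>)) \<partial>SM) =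
      indicator {a'. 0 < a'} a * (\<integral>\<^sup>+\<omega>. indicator {\<omega>. fidx \<omega> (a - fst x) i} \<omega> * g (sdrop i \<omega>) \<partial>SM)" .
  qed
  finally show ?thesis .
qed

lemma indep:
  assumes g[measurable]: "g \<in> borel_measurable SM"
  shows "(\<integral>\<^sup>+\<omega>. indicator {\<omega>. fidx \<omega> a i} \<omega> * g (sdrop i \<omega>) \<partial>SM) = Pf i a * (\<integral>\<^sup>+\<omega>. g \<omega> \<partial>SM)"
  using g
proof (induction i arbitrary: a g)
  case 0
  have m: "g \<in> borel_measurable SM" by fact
  have "(\<integral>\<^sup>+\<omega>. indicator {\<omega>. fidx \<omega> a 0} \<omega> * g (sdrop 0 \<omega>) \<partial>SM) = (\<integral>\<^sup>+\<omega>. indicator {a'. a' \<le> 0} a * g \<omega> \<partial>SM)"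
    by (rule nn_integral_cong) (simp add: fidx_def split: split_indicator)
  also have "\<dots> = indicator {a'. a' \<le> 0} a * (\<integral>\<^sup>+\<omega>. g \<omega> \<partial>SM)" by (rule nn_integral_cmult[OF m])
  also have "Pf 0 a = indicator {a'. a' \<le> 0} a"
  proof -
    interpret S: prob_space SM by (rule prob_space.prob_space_stream_space[OF PM])
    have "Pf 0 a = (\<integral>\<^sup>+\<omega>. indicator {a'. a' \<le> 0} a \<partial>SM)"
      unfolding Pf_def by (rule nn_integral_cong) (simp add: fidx_def split: split_indicator)
    then show ?thesis by (simp add: S.emeasure_space_1)
  qed
  ultimately show ?case by simp
next
  case (Suc i)
  interpret S: prob_space SM by (rule prob_space.prob_space_stream_space[OF PM])
  have m: "g \<in> borel_measurable SM" by fact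
  have "(\<integral>\<^sup>+\<omega>. indicator {\<omega>. fidx \<omega> a (Suc i)} \<omega> * g (sdrop (Suc i) \<omega>) \<partial>SM) =
    (\<integral>\<^sup>+x. indicator {a'. 0 < a'} a * (Pf i (a - fst x) * (\<integral>\<^sup>+\<omega>. g \<omega> \<partial>SM)) \<partial>mark_measure n b1)"
    unfolding chain_step[OF m] Suc.IH[OF m] ..
  also have "\<dots> = (\<integral>\<^sup>+x. indicator {a'. 0 < a'} a * Pf i (a - fst x) \<partial>mark_measure n b1) * (\<integral>\<^sup>+\<omega>. g \<omega> \<partial>SM)"
    by (subst nn_integral_multc[symmetric]) (auto simp: mult.assoc)
  also have "(\<integral>\<^sup>+x. indicator {a'. 0 < a'} a * Pf i (a - fst x) \<partial>mark_measure n b1) = Pf (Suc i) a"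
  proof -
    have one: "(\<lambda>\<omega>. 1::ennreal) \<in> borel_measurable SM" by simp
    have "Pf (Suc i) a = (\<integral>\<^sup>+\<omega>. indicator {\<omega>. fidx \<omega> a (Suc i)} \<omega> * (\<lambda>_. 1) (sdrop (Suc i) \<omega>) \<partial>SM)"
      unfolding Pf_def by simp
    also have "\<dots> = (\<integral>\<^sup>+x. indicator {a'. 0 < a'} a * (Pf i (a - fst x) * (\<integral>\<^sup>+\<omega>. 1 \<partial>SM)) \<partial>mark_measure n b1)"
      unfolding chain_step[OF one] Suc.IH[OF one] ..
    finally show ?thesis by (simp add: S.emeasure_space_1)
  qed
  finally show ?case .
qed

lemma fidx_unique: "fidx \<omega> a i \<Longrightarrow> fidx \<omega> a i' \<Longrightarrow> i = i'"
  unfolding fidx_def by (metis linorder_neqE_nat not_le)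

lemma R_bound:
  "emeasure (crystal_space n b1) {\<omega> \<in> space (crystal_space n b1). \<exists>i. fidx \<omega> a i \<and> Bsum (sdrop i \<omega>) m \<le> w}
    \<le> ennreal (exp (lam * w) * (1/2)^m)"
proof -
  interpret S: prob_space SM by (rule prob_space.prob_space_stream_space[OF PM])
  define D where "D = (\<lambda>i. {\<omega>. fidx \<omega> a i \<and> Bsum (sdrop i \<omega>) m \<le> w})"
  define A where "A = (\<lambda>i. {\<omega>. fidx \<omega> a i})"
  have dD: "disjoint_family D" unfolding D_def disjoint_family_on_def using fidx_unique by blast
  have dA: "disjoint_family A" unfolding A_def disjoint_family_on_def using fidx_unique by blast
  have R: "{\<omega> \<in> space (crystal_space n b1). \<exists>i. fidx \<omega> a i \<and> Bsum (sdrop i \<omega>) m \<le> w} = (\<Union>i. D i)"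
    unfolding D_def S_eq space_SM by auto
  have mB: "(\<lambda>\<omega>. indicator {\<omega>. Bsum \<omega> m \<le> w} \<omega> :: ennreal) \<in> borel_measurable SM"
    by (rule borel_measurable_indicator) (simp add: pred_def[symmetric, of SM "\<lambda>\<omega>. Bsum \<omega> m \<le> w", unfolded space_SM, simplified])
  have mA: "(\<lambda>\<omega>. indicator (A i) \<omega> :: ennreal) \<in> borel_measurable SM" for i
    using meas_fidx[of a i] unfolding A_def pred_def space_SM by simp
  have mD: "(\<lambda>\<omega>. indicator (D i) \<omega> :: ennreal) \<in> borel_measurable SM" for i
  proof -
    have "(\<lambda>\<omega>. indicator (D i) \<omega> :: ennreal) = (\<lambda>\<omega>. indicator {\<omega>. fidx \<omega> a i} \<omega> * indicator {\<omega>. Bsum \<omega> m \<le> w} (sdrop i \<omega>))"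
      unfolding D_def by (auto split: split_indicator)
    also have "\<dots> \<in> borel_measurable SM" using mA[of i] mB unfolding A_def by measurable
    finally show ?thesis .
  qed
  have Dsets: "D i \<in> sets SM" for i
    using mD[of i] unfolding borel_measurable_indicator_iff space_SM by simp
  have "emeasure (crystal_space n b1) (\<Union>i. D i) = (\<integral>\<^sup>+\<omega>. indicator (\<Union>i. D i) \<omega> \<partial>SM)"
    unfolding S_eq by (rule nn_integral_indicator[symmetric]) (auto intro: Dsets)
  also have "\<dots> = (\<integral>\<^sup>+\<omega>. (\<Sum>i. indicator (D i) \<omega>) \<partial>SM)"
    using suminf_indicator[OF dD] by simp
  also have "\<dots> = (\<Sum>i. \<integral>\<^sup>+\<omega>. indicator (D i) \<omega> \<partial>SM)"
    by (rule nn_integral_suminf) (rule mD)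
  also have "\<dots> = (\<Sum>i. Pf i a * (\<integral>\<^sup>+\<omega>. indicator {\<omega>. Bsum \<omega> m \<le> w} \<omega> \<partial>SM))"
  proof (rule suminf_cong)
    fix i
    have "(\<integral>\<^sup>+\<omega>. indicator (D i) \<omega> \<partial>SM) = (\<integral>\<^sup>+\<omega>. indicator {\<omega>. fidx \<omega> a i} \<omega> * indicator {\<omega>. Bsum \<omega> m \<le> w} (sdrop i \<omega>) \<partial>SM)"
      unfolding D_def by (rule nn_integral_cong) (auto split: split_indicator)
    also have "\<dots> = Pf i a * (\<integral>\<^sup>+\<omega>. indicator {\<omega>. Bsum \<omega> m \<le> w} \<omega> \<partial>SM)"
      by (rule indep[OF mB])
    finally show "(\<integral>\<^sup>+\<omega>. indicator (D i) \<omega> \<partial>SM) = Pf i a * (\<integral>\<^sup>+\<omega>. indicator {\<omega>. Bsum \<omega> m \<le> w} \<omega> \<partial>SM)" .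
  qed
  also have "\<dots> = (\<Sum>i. Pf i a) * (\<integral>\<^sup>+\<omega>. indicator {\<omega>. Bsum \<omega> m \<le> w} \<omega> \<partial>SM)"
    by simp
  also have "\<dots> \<le> 1 * ennreal (exp (lam * w) * (1/2)^m)"
  proof (rule mult_mono)
    have "(\<Sum>i. Pf i a) = (\<Sum>i. \<integral>\<^sup>+\<omega>. indicator (A i) \<omega> \<partial>SM)" unfolding Pf_def A_def ..
    also have "\<dots> = (\<integral>\<^sup>+\<omega>. (\<Sum>i. indicator (A i) \<omega>) \<partial>SM)"
      by (rule nn_integral_suminf[symmetric]) (rule mA)
    also have "\<dots> = (\<integral>\<^sup>+\<omega>. indicator (\<Union>i. A i) \<omega> \<partial>SM)" using suminf_indicator[OF dA] by simp
    also have "\<dots> \<le> (\<integral>\<^sup>+\<omega>. 1 \<partial>SM)" by (rule nn_integral_mono) (auto split: split_indicator)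
    also have "\<dots> = 1" by (simp add: S.emeasure_space_1)
    finally show "(\<Sum>i. Pf i a) \<le> 1" .
    have "(\<integral>\<^sup>+\<omega>. indicator {\<omega>. Bsum \<omega> m \<le> w} \<omega> \<partial>SM) =
        emeasure (crystal_space n b1) {\<omega> \<in> space (crystal_space n b1). Bsum \<omega> m \<le> w}"
      using mB unfolding S_eq space_SM by (subst nn_integral_indicator) (auto simp: borel_measurable_indicator_iff space_SM)
    then show "(\<integral>\<^sup>+\<omega>. indicator {\<omega>. Bsum \<omega> m \<le> w} \<omega> \<partial>SM) \<le> ennreal (exp (lam * w) * (1/2)^m)"
      using Bsum_tail[of m w] by simp
  qed auto
  finally show ?thesis unfolding R by simp
qed

end

lemma min_exp:
  fixes a b th rh :: real
  assumes "0 \<le> th" "0 \<le> rh" "th + rh = 1"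
  shows "min (exp a) (exp b) \<le> exp (th * a + rh * b)"
proof -
  have "min a b \<le> th * a + rh * b"
  proof -
    have "th * min a b \<le> th * a" "rh * min a b \<le> rh * b"
      using assms by (auto intro: mult_left_mono)
    then have "(th + rh) * min a b \<le> th * a + rh * b" by (simp add: distrib_right)
    then show ?thesis using assms by simp
  qed
  moreover have "min (exp a) (exp b) = exp (min a b)" by (simp add: min_def)
  ultimately show ?thesis by simp
qed

lemma half_pow: "(1/2::real) ^ j = exp (- (real j * ln 2))"
proof -
  have "exp (- (real j * ln 2)) = exp (real j * (- ln (2::real)))" by simp
  also have "\<dots> = exp (- ln (2::real)) ^ j" by (rule exp_of_nat_mult)
  also have "exp (- ln (2::real)) = 1/2" by (simp add: exp_minus inverse_eq_divide)
  finally show ?thesis by simp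
qed

lemma term_bound:
  fixes Cj aj lam m :: real and K :: nat
  assumes Cj: "0 < Cj" and aj: "0 < aj" and lam: "0 < lam" and m: "0 \<le> m" and K: "1 \<le> K"
  defines "rh \<equiv> aj / (2 * (lam + aj))"
  shows "min (Cj * exp (- aj * m)) (exp (lam * (m + 1)) * (1/2) ^ (K - 1))
    \<le> exp ((1 - rh) * ln Cj + rh * (lam + ln 2)) * exp (- (aj / 2) * m) * exp (- (rh * ln 2) * real K)"
proof -
  have pos: "0 < 2 * (lam + aj)" using aj lam by simp
  have rh0: "0 \<le> rh" "rh \<le> 1" unfolding rh_def using aj lam pos
    by (simp_all add: divide_nonneg_nonneg pos_divide_le_eq)
  have key: "rh * (aj + lam) = aj / 2" unfolding rh_def using pos
    by (simp add: divide_simps add.commute)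
  have A: "Cj * exp (- aj * m) = exp (ln Cj - aj * m)" using Cj by (simp add: exp_diff exp_minus divide_inverse)
  have B: "exp (lam * (m + 1)) * (1/2) ^ (K - 1) = exp (lam * (m + 1) - real (K - 1) * ln 2)"
    unfolding half_pow by (simp add: exp_add[symmetric])
  have "min (Cj * exp (- aj * m)) (exp (lam * (m + 1)) * (1/2) ^ (K - 1))
      \<le> exp ((1 - rh) * (ln Cj - aj * m) + rh * (lam * (m + 1) - real (K - 1) * ln 2))"
    unfolding A B by (rule min_exp) (use rh0 in auto)
  also have "(1 - rh) * (ln Cj - aj * m) + rh * (lam * (m + 1) - real (K - 1) * ln 2) =
      ((1 - rh) * ln Cj + rh * (lam + ln 2)) + (- (aj / 2) * m) + (- (rh * ln 2) * real K)"
  proof -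
    have kk: "real (K - 1) = real K - 1" using K by simp
    show ?thesis unfolding kk using key by algebra
  qed
  finally show ?thesis by (simp only: exp_add)
qed

lemma geo_rev:
  fixes q :: real
  assumes "0 < q" "q < 1"
  shows "(\<Sum>l\<le>N. q ^ (N - l)) \<le> 1 / (1 - q)"
proof -
  have "(\<Sum>l\<le>N. q ^ (N - l)) = (\<Sum>l<Suc N. q ^ (Suc N - Suc l))"
    by (simp add: lessThan_Suc_atMost)
  also have "\<dots> = (\<Sum>l<Suc N. q ^ l)"
    by (rule sum.nat_diff_reindex)
  also have "\<dots> \<le> 1 / (1 - q)"
    using geometric_sum_less[OF assms, of "{..<Suc N}"] by simp
  finally show ?thesis .
qed

lemma sum_bound:
  fixes Cj aj lam t :: real and K N :: nat
  assumes Cj: "0 < Cj" and aj: "0 < aj" and lam: "0 < lam" and K: "1 \<le> K" and N: "real N \<le> t"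
  defines "rh \<equiv> aj / (2 * (lam + aj))"
  shows "(\<Sum>l\<le>N. min (Cj * exp (- aj * (t - real l))) (exp (lam * (t - real l + 1)) * (1/2) ^ (K - 1)))
      + exp lam * (1/2) ^ (K - 1)
    \<le> (exp ((1 - rh) * ln Cj + rh * (lam + ln 2)) / (1 - exp (- (aj / 2))) + 2 * exp lam) * exp (- (rh * ln 2) * real K)"
proof -
  define c1 where "c1 = exp ((1 - rh) * ln Cj + rh * (lam + ln 2))"
  define E where "E = exp (- (rh * ln 2) * real K)"
  define q where "q = exp (- (aj / 2))"
  have q: "0 < q" "q < 1" unfolding q_def using aj by auto
  have E0: "0 \<le> E" "0 \<le> c1" unfolding E_def c1_def by auto
  have rh1: "rh \<le> 1" "0 \<le> rh" unfolding rh_def using aj lam by (simp_all add: pos_divide_le_eq)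
  have t1: "min (Cj * exp (- aj * (t - real l))) (exp (lam * (t - real l + 1)) * (1/2) ^ (K - 1))
      \<le> c1 * E * q ^ (N - l)" if l: "l \<le> N" for l
  proof -
    have m: "0 \<le> t - real l" using l N by simp
    have "min (Cj * exp (- aj * (t - real l))) (exp (lam * (t - real l + 1)) * (1/2) ^ (K - 1))
      \<le> c1 * exp (- (aj / 2) * (t - real l)) * E"
      using term_bound[OF Cj aj lam m K] unfolding c1_def E_def rh_def by simp
    also have "exp (- (aj / 2) * (t - real l)) \<le> q ^ (N - l)"
    proof -
      have "q ^ (N - l) = exp (real (N - l) * (- (aj / 2)))" unfolding q_def by (rule exp_of_nat_mult[symmetric])
      moreover have "real (N - l) \<le> t - real l" using l N by simp
      ultimately show ?thesis using aj by (simp add: mult.commute)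
    qed
    then have "c1 * exp (- (aj / 2) * (t - real l)) * E \<le> c1 * q ^ (N - l) * E"
      using E0 by (intro mult_right_mono mult_left_mono) auto
    finally show ?thesis by (simp add: mult_ac)
  qed
  have "(\<Sum>l\<le>N. min (Cj * exp (- aj * (t - real l))) (exp (lam * (t - real l + 1)) * (1/2) ^ (K - 1)))
      \<le> (\<Sum>l\<le>N. c1 * E * q ^ (N - l))" by (rule sum_mono) (use t1 in auto)
  also have "\<dots> = c1 * E * (\<Sum>l\<le>N. q ^ (N - l))" by (simp add: sum_distrib_left)
  also have "\<dots> \<le> c1 * E * (1 / (1 - q))"
    using geo_rev[OF q, of N] E0 by (intro mult_left_mono) auto
  finally have S1: "(\<Sum>l\<le>N. min (Cj * exp (- aj * (t - real l))) (exp (lam * (t - real l + 1)) * (1/2) ^ (K - 1)))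
      \<le> c1 / (1 - q) * E" by simp
  have S2: "exp lam * (1/2) ^ (K - 1) \<le> 2 * exp lam * E"
  proof -
    have "(1/2::real) ^ (K - 1) = 2 * (1/2) ^ K" using K by (cases K) auto
    also have "(1/2::real) ^ K = exp (- (real K * ln 2))" by (rule half_pow)
    also have "\<dots> \<le> E"
    proof -
      have "rh * ln 2 \<le> ln (2::real)" using rh1 by (simp add: mult_left_le_one_le)
      then have "real K * (rh * ln 2) \<le> real K * ln 2" by (intro mult_left_mono) auto
      then show ?thesis unfolding E_def by (simp add: mult.commute)
    qed
    finally show ?thesis by simp
  qed
  have eq: "(c1 / (1 - q) + 2 * exp lam) * E = c1 / (1 - q) * E + 2 * exp lam * E" by (simp add: distrib_right)
  have "(\<Sum>l\<le>N. min (Cj * exp (- aj * (t - real l))) (exp (lam * (t - real l + 1)) * (1/2) ^ (K - 1)))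
      + exp lam * (1/2) ^ (K - 1) \<le> (c1 / (1 - q) + 2 * exp lam) * E"
    using S1 S2 eq by linarith
  then show ?thesis unfolding c1_def q_def E_def .
qed

lemma meas_Rs:
  assumes "0 < n" "0 < b1"
  shows "{\<omega> \<in> space (crystal_space n b1). \<exists>i. fidx \<omega> a i \<and> Bsum (sdrop i \<omega>) m \<le> w} \<in> sets (crystal_space n b1)"
proof -
  note [measurable] = meas_fidx[OF assms] meas_Bsum[OF assms]
  show ?thesis unfolding S_eq[OF assms] by measurable
qed

lemma R_meas_bound:
  assumes "0 < n" "0 < b1"
  shows "measure (crystal_space n b1) {\<omega> \<in> space (crystal_space n b1). \<exists>i. fidx \<omega> a i \<and> Bsum (sdrop i \<omega>) m \<le> w}
    \<le> exp (real n * b1 * w) * (1/2)^m"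
proof -
  interpret P: prob_space "crystal_space n b1" by (rule PS[OF assms])
  have "ennreal (measure (crystal_space n b1) {\<omega> \<in> space (crystal_space n b1). \<exists>i. fidx \<omega> a i \<and> Bsum (sdrop i \<omega>) m \<le> w})
    \<le> ennreal (exp (real n * b1 * w) * (1/2)^m)"
    using R_bound[OF assms, of a m w] by (simp add: P.emeasure_eq_measure)
  moreover have "0 < exp (real n * b1 * w) * (1/2::real)^m" by simp
  ultimately show ?thesis by (auto simp: ennreal_le_iff2)
qed

theorem lemma11:
  fixes b0 b1 b2 :: real and n j :: nat
  assumes rates_nonneg: "0 \<le> b0"
    and order: "b0 < b2" "b2 < b1"
    and n: "2 \<le> n"
    and j: "1 \<le> j" "j \<le> n - 1"
    and hyp: "\<exists>Cj \<alpha>j. Cj > 0 \<and> \<alpha>j > 0 \<and>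
      (\<forall>t::real. t \<ge> 0 \<longrightarrow> (\<forall>l::nat. real l \<le> t \<longrightarrow>
         measure (crystal_space n b1)
           {\<omega> \<in> space (crystal_space n b1). gapX b0 b1 b2 \<omega> j t > 0 \<and>
              tauX b0 b1 b2 \<omega> j t \<in> {real l - 1..<real l}}
         \<le> Cj * exp (- \<alpha>j * (t - real l))))"
  shows "\<exists>C \<alpha>. C > 0 \<and> \<alpha> > 0 \<and>
      (\<forall>t::real. t \<ge> 0 \<longrightarrow> (\<forall>k::real. k \<ge> 0 \<longrightarrow>
         measure (crystal_space n b1)
           {\<omega> \<in> space (crystal_space n b1). real_of_int (gapX b0 b1 b2 \<omega> j t) \<ge> k}
         \<le> C * exp (- \<alpha> * k)))"
proof -
  obtain Cj aj where Cj: "Cj > 0" and aj: "aj > 0" and H: "\<And>t l. t \<ge> 0 \<Longrightarrow> real l \<le> t \<Longrightarrow>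
         measure (crystal_space n b1)
           {\<omega> \<in> space (crystal_space n b1). gapX b0 b1 b2 \<omega> j t > 0 \<and>
              tauX b0 b1 b2 \<omega> j t \<in> {real l - 1..<real l}}
         \<le> Cj * exp (- aj * (t - real l))"
    using hyp by blast
  have n0: "0 < n" using n by simp
  have b10: "0 < b1" using order rates_nonneg by simp
  interpret P: prob_space "crystal_space n b1" by (rule PS[OF n0 b10])
  define lam where "lam = real n * b1"
  have lam: "0 < lam" unfolding lam_def using n0 b10 by simp
  define rh where "rh = aj / (2 * (lam + aj))"
  have rh: "0 < rh" unfolding rh_def using aj lam by simp
  define C0 where "C0 = exp ((1 - rh) * ln Cj + rh * (lam + ln 2)) / (1 - exp (- (aj / 2))) + 2 * exp lam"
  have C0: "0 < C0"
  proof -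
    have "0 < 1 - exp (- (aj / 2))" using aj by simp
    then show ?thesis unfolding C0_def by (intro add_pos_pos divide_pos_pos) auto
  qed
  define C where "C = max 1 C0"
  define al where "al = rh * ln 2"
  have al: "0 < al" unfolding al_def using rh by simp
  have main: "measure (crystal_space n b1)
           {\<omega> \<in> space (crystal_space n b1). real_of_int (gapX b0 b1 b2 \<omega> j t) \<ge> k}
         \<le> C * exp (- al * k)" if t: "0 \<le> t" and k: "0 \<le> k" for t k
  proof (cases "k = 0")
    case True
    then show ?thesis unfolding C_def using P.prob_le_1 by (simp add: le_max_iff_disj)
  next
    case False
    then have kpos: "0 < k" using k by simp
    define K where "K = nat (ceiling k)"
    have K1: "1 \<le> K" unfolding K_def using kpos by linarith
    have Kk: "k \<le> real K" unfolding K_def using kpos by linarith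
    define N where "N = nat (floor t)"
    have Nt: "real N \<le> t" unfolding N_def using t by linarith
    define Hs where "Hs = (\<lambda>l::nat. {\<omega> \<in> space (crystal_space n b1). gapX b0 b1 b2 \<omega> j t > 0 \<and>
              tauX b0 b1 b2 \<omega> j t \<in> {real l - 1..<real l}})"
    define Rs where "Rs = (\<lambda>a w. {\<omega> \<in> space (crystal_space n b1). \<exists>i. fidx \<omega> a i \<and> Bsum (sdrop i \<omega>) (K - 1) \<le> w})"
    define U where "U = (\<Union>l\<in>{..N}. Hs l \<inter> Rs (real l - 1) (t - (real l - 1))) \<union> Rs (t - 1) 1"
    have Hs_sets: "Hs l \<in> sets (crystal_space n b1)" for l
    proof -
      have [measurable]: "(\<lambda>\<omega>. gapX b0 b1 b2 \<omega> j t) \<in> measurable (crystal_space n b1) (count_space UNIV)"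
        using meas_gap[where r="\<lambda>_. t", OF borel_measurable_const] .
      show ?thesis unfolding Hs_def by measurable
    qed
    have Rs_sets: "Rs a w \<in> sets (crystal_space n b1)" for a w
      unfolding Rs_def by (rule meas_Rs[OF n0 b10])
    have U_sets: "U \<in> sets (crystal_space n b1)"
      unfolding U_def using Hs_sets Rs_sets by auto
    have AEU: "AE \<omega> in crystal_space n b1. \<omega> \<in> {\<omega> \<in> space (crystal_space n b1). real_of_int (gapX b0 b1 b2 \<omega> j t) \<ge> k} \<longrightarrow> \<omega> \<in> U"
      using AE_pos[OF n0 b10]
    proof eventually_elim
      case (elim \<omega>)
      show ?case
      proof
        assume \<omega>: "\<omega> \<in> {\<omega> \<in> space (crystal_space n b1). real_of_int (gapX b0 b1 b2 \<omega> j t) \<ge> k}"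
        then have gk: "k \<le> real_of_int (gapX b0 b1 b2 \<omega> j t)" and sp: "\<omega> \<in> space (crystal_space n b1)" by auto
        have gK: "int K \<le> gapX b0 b1 b2 \<omega> j t" unfolding K_def using gk kpos
          by (simp add: ceiling_le_iff)
        note cmb = comb[OF elim K1 gK]
        define tau where "tau = tauX b0 b1 b2 \<omega> j t"
        have tau0: "0 \<le> tau" and taut: "tau \<le> t"
          and R: "\<And>a. a \<le> tau \<Longrightarrow> \<exists>i. fidx \<omega> a i \<and> Bsum (sdrop i \<omega>) (K - 1) \<le> t - a"
          using cmb unfolding tau_def by auto
        define L where "L = nat (floor tau) + 1"
        have L1: "real L - 1 \<le> tau" "tau < real L" unfolding L_def using tau0 by linarith+
        show "\<omega> \<in> U"
        proof (cases "L \<le> N")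
          case True
          have "\<omega> \<in> Hs L" unfolding Hs_def using sp gK K1 L1 by (auto simp: tau_def)
          moreover have "\<omega> \<in> Rs (real L - 1) (t - (real L - 1))" unfolding Rs_def using sp R[OF L1(1)] by auto
          ultimately show ?thesis unfolding U_def using True by blast
        next
          case False
          then have "t - 1 \<le> tau" unfolding L_def N_def using tau0 t by linarith
          then have "\<omega> \<in> Rs (t - 1) 1" unfolding Rs_def using sp R[of "t - 1"] by auto
          then show ?thesis unfolding U_def by blast
        qed
      qed
    qed
    have "measure (crystal_space n b1) {\<omega> \<in> space (crystal_space n b1). real_of_int (gapX b0 b1 b2 \<omega> j t) \<ge> k}
        \<le> measure (crystal_space n b1) U"
      by (rule P.finite_measure_mono_AE[OF AEU U_sets])
    also have "\<dots> \<le> measure (crystal_space n b1) (\<Union>l\<in>{..N}. Hs l \<inter> Rs (real l - 1) (t - (real l - 1)))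
        + measure (crystal_space n b1) (Rs (t - 1) 1)"
      unfolding U_def by (rule measure_Un_le) (use Hs_sets Rs_sets in auto)
    also have "\<dots> \<le> (\<Sum>l\<le>N. measure (crystal_space n b1) (Hs l \<inter> Rs (real l - 1) (t - (real l - 1))))
        + measure (crystal_space n b1) (Rs (t - 1) 1)"
      by (intro add_right_mono measure_UNION_le) (use Hs_sets Rs_sets in auto)
    also have "\<dots> \<le> (\<Sum>l\<le>N. min (Cj * exp (- aj * (t - real l))) (exp (lam * (t - real l + 1)) * (1/2) ^ (K - 1)))
        + exp lam * (1/2) ^ (K - 1)"
    proof (intro add_mono sum_mono)
      fix l assume "l \<in> {..N}"
      then have lt: "real l \<le> t" using Nt by simp
      have "measure (crystal_space n b1) (Hs l \<inter> Rs (real l - 1) (t - (real l - 1))) \<le> measure (crystal_space n b1) (Hs l)"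
        by (rule P.finite_measure_mono) (use Hs_sets in auto)
      also have "\<dots> \<le> Cj * exp (- aj * (t - real l))" unfolding Hs_def by (rule H[OF t lt])
      finally have 1: "measure (crystal_space n b1) (Hs l \<inter> Rs (real l - 1) (t - (real l - 1))) \<le> Cj * exp (- aj * (t - real l))" .
      have "measure (crystal_space n b1) (Hs l \<inter> Rs (real l - 1) (t - (real l - 1))) \<le> measure (crystal_space n b1) (Rs (real l - 1) (t - (real l - 1)))"
        by (rule P.finite_measure_mono) (use Rs_sets in auto)
      also have "\<dots> \<le> exp (lam * (t - (real l - 1))) * (1/2) ^ (K - 1)"
        unfolding Rs_def lam_def by (rule R_meas_bound[OF n0 b10])
      finally have 2: "measure (crystal_space n b1) (Hs l \<inter> Rs (real l - 1) (t - (real l - 1))) \<le> exp (lam * (t - real l + 1)) * (1/2) ^ (K - 1)"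
        by (simp add: algebra_simps)
      show "measure (crystal_space n b1) (Hs l \<inter> Rs (real l - 1) (t - (real l - 1)))
          \<le> min (Cj * exp (- aj * (t - real l))) (exp (lam * (t - real l + 1)) * (1/2) ^ (K - 1))"
        using 1 2 by simp
    next
      show "measure (crystal_space n b1) (Rs (t - 1) 1) \<le> exp lam * (1/2) ^ (K - 1)"
        unfolding Rs_def lam_def using R_meas_bound[OF n0 b10, of "t - 1" "K - 1" 1] by simp
    qed
    also have "\<dots> \<le> C0 * exp (- (rh * ln 2) * real K)"
      unfolding C0_def rh_def by (rule sum_bound[OF Cj aj lam K1 Nt])
    also have "\<dots> \<le> C * exp (- al * k)"
    proof (rule mult_mono)
      show "C0 \<le> C" unfolding C_def by simp
      show "exp (- (rh * ln 2) * real K) \<le> exp (- al * k)"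
        unfolding al_def[symmetric] using al Kk by (simp add: mult_left_mono)
    qed (use C0 in \<open>auto simp: C_def\<close>)
    finally show ?thesis .
  qed
  show ?thesis
  proof (intro exI conjI allI impI)
    show "0 < C" unfolding C_def by simp
    show "0 < al" by (rule al)
  next
    fix t k :: real assume "0 \<le> t" "0 \<le> k"
    then show "measure (crystal_space n b1)
           {\<omega> \<in> space (crystal_space n b1). real_of_int (gapX b0 b1 b2 \<omega> j t) \<ge> k}
         \<le> C * exp (- al * k)" by (rule main)
  qed
qed


end
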